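(* Let $I\subset\mathbb{N}$ be finite, let $G_1,G_2$ be groups, and for each $i\in I$ let $K_{1_i}\le G_1$ and $K_{2_i}\le G_2$. If $(G_1,(K_{1_i})_{i\in I})$ and $(G_2,(K_{2_i})_{i\in I})$ are subgroup geometry systems, then so is $(G_1\times G_2,(K_{1_i}\times K_{2_i})_{i\in I})$.
   Context: For a group $G$ with subgroups $(K_{\{i\}})_{i\in I}$, put $K_\tau=\bigcap_{i\in\tau}K_{\{i\}}$ for $\emptyset\ne\tau\subseteq I$ and $K_\emptyset=G$. $(G,(K_{\{i\}})_{i\in I})$ is a subgroup geometry system if: (A1) for all $\tau,\tau'\subseteq I$, $K_{\tau\cap\tau'}=\langle K_\tau,K_{\tau'}\rangle$; (A2) for every $\tau\subsetneq I$ and $i\in I\setminus\tau$, $K_\tau K_{\{i\}}=\bigcap_{j\in\tau}K_{\{j\}}K_{\{i\}}$; (A3) for every $i\in I$, $K_I\ne K_{I\setminus\{i\}}$. *)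

theory Defs
  imports "HOL-Algebra.Algebra"
begin

definition Kint :: "('a, 'b) monoid_scheme \<Rightarrow> ('i \<Rightarrow> 'a set) \<Rightarrow> 'i set \<Rightarrow> 'a set" where
  "Kint G K \<tau> = (if \<tau> = {} then carrier G else (\<Inter>i\<in>\<tau>. K i))"

definition subgroup_geometry_system ::
  "('a, 'b) monoid_scheme \<Rightarrow> 'i set \<Rightarrow> ('i \<Rightarrow> 'a set) \<Rightarrow> bool" where
  "subgroup_geometry_system G I K \<longleftrightarrow>
     group G \<and> (\<forall>i\<in>I. subgroup (K i) G) \<and>
     (\<comment> \<open>A1\<close> \<forall>\<tau> \<tau>'. \<tau> \<subseteq> I \<longrightarrow> \<tau>' \<subseteq> I \<longrightarrow>
        Kint G K (\<tau> \<inter> \<tau>') = generate G (Kint G K \<tau> \<union> Kint G K \<tau>')) \<and>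
     (\<comment> \<open>A2\<close> \<forall>\<tau> i. \<tau> \<subset> I \<longrightarrow> i \<in> I - \<tau> \<longrightarrow>
        Kint G K \<tau> <#>\<^bsub>G\<^esub> K i = Kint G (\<lambda>j. K j <#>\<^bsub>G\<^esub> K i) \<tau>) \<and>
     (\<comment> \<open>A3\<close> \<forall>i\<in>I. Kint G K I \<noteq> Kint G K (I - {i}))"

end

theory Submission
  imports Defs
begin

lemma Kint_subgroup:
  assumes "group G" "\<And>i. i \<in> I \<Longrightarrow> subgroup (K i) G" "\<tau> \<subseteq> I"
  shows "subgroup (Kint G K \<tau>) G"
proof (cases "\<tau> = {}")
  case True
  then show ?thesis using assms(1) by (simp add: Kint_def group.subgroup_self)
next
  case False
  have "subgroup (\<Inter>(K ` \<tau>)) G"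
    by (rule group.subgroups_Inter[OF assms(1)]) (use assms False in auto)
  then show ?thesis using False by (simp add: Kint_def)
qed

lemma Kint_prod:
  "Kint (G1 \<times>\<times> G2) (\<lambda>j. F j \<times> H j) \<tau> = Kint G1 F \<tau> \<times> Kint G2 H \<tau>"
proof (cases "\<tau> = {}")
  case True
  then show ?thesis by (simp add: Kint_def)
next
  case False
  then show ?thesis unfolding Kint_def by auto
qed

lemma setmult_prod:
  "(A \<times> B) <#>\<^bsub>G1 \<times>\<times> G2\<^esub> (C \<times> D) = (A <#>\<^bsub>G1\<^esub> C) \<times> (B <#>\<^bsub>G2\<^esub> D)"
  unfolding set_mult_def by (auto simp: mult_DirProd'; blast)

lemma gen_prod:
  assumes g1: "group G1" and g2: "group G2"
    and s: "subgroup A1 G1" "subgroup B1 G1" "subgroup A2 G2" "subgroup B2 G2"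
  shows "generate (G1 \<times>\<times> G2) (A1 \<times> A2 \<union> B1 \<times> B2)
       = generate G1 (A1 \<union> B1) \<times> generate G2 (A2 \<union> B2)"
proof -
  interpret G1: group G1 by fact
  interpret G2: group G2 by fact
  have Pg: "group (G1 \<times>\<times> G2)" using DirProd_group g1 g2 by blast
  let ?S = "A1 \<times> A2 \<union> B1 \<times> B2"
  let ?H = "generate (G1 \<times>\<times> G2) ?S"
  have c1: "A1 \<union> B1 \<subseteq> carrier G1" using s subgroup.subset by blast
  have c2: "A2 \<union> B2 \<subseteq> carrier G2" using s subgroup.subset by blast
  have cS: "?S \<subseteq> carrier (G1 \<times>\<times> G2)" using c1 c2 by auto
  have sg1: "subgroup (generate G1 (A1 \<union> B1)) G1" using G1.generate_is_subgroup c1 by blast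
  have sg2: "subgroup (generate G2 (A2 \<union> B2)) G2" using G2.generate_is_subgroup c2 by blast
  have sH: "subgroup ?H (G1 \<times>\<times> G2)" using group.generate_is_subgroup[OF Pg] cS by blast
  have SH: "?S \<subseteq> ?H" by (rule subsetI, erule generate.incl)
  show ?thesis
  proof
    show "?H \<subseteq> generate G1 (A1 \<union> B1) \<times> generate G2 (A2 \<union> B2)"
    proof (rule group.generate_subgroup_incl[OF Pg])
      show "subgroup (generate G1 (A1 \<union> B1) \<times> generate G2 (A2 \<union> B2)) (G1 \<times>\<times> G2)"
        using DirProd_subgroups[OF g1 sg1 g2 sg2] .
      show "?S \<subseteq> generate G1 (A1 \<union> B1) \<times> generate G2 (A2 \<union> B2)"
      proof -
        have "A1 \<union> B1 \<subseteq> generate G1 (A1 \<union> B1)" by (rule subsetI, erule generate.incl)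
        moreover have "A2 \<union> B2 \<subseteq> generate G2 (A2 \<union> B2)" by (rule subsetI, erule generate.incl)
        ultimately show ?thesis by blast
      qed
    qed
  next
    define H1 where "H1 = {x \<in> carrier G1. (x, \<one>\<^bsub>G2\<^esub>) \<in> ?H}"
    define H2 where "H2 = {y \<in> carrier G2. (\<one>\<^bsub>G1\<^esub>, y) \<in> ?H}"
    have "subgroup H1 G1"
    proof (rule G1.subgroupI)
      show "H1 \<subseteq> carrier G1" unfolding H1_def by auto
      show "H1 \<noteq> {}" unfolding H1_def using subgroup.one_closed[OF sH] by auto
      show "inv\<^bsub>G1\<^esub> a \<in> H1" if "a \<in> H1" for a
      proof -
        have "inv\<^bsub>G1 \<times>\<times> G2\<^esub> (a, \<one>\<^bsub>G2\<^esub>) \<in> ?H"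
          using subgroup.m_inv_closed[OF sH] that unfolding H1_def by blast
        moreover have "inv\<^bsub>G1 \<times>\<times> G2\<^esub> (a, \<one>\<^bsub>G2\<^esub>) = (inv\<^bsub>G1\<^esub> a, \<one>\<^bsub>G2\<^esub>)"
          using inv_DirProd[OF g1 g2, of a "\<one>\<^bsub>G2\<^esub>"] that G2.inv_one unfolding H1_def by simp
        ultimately show ?thesis using that unfolding H1_def by simp
      qed
      show "a \<otimes>\<^bsub>G1\<^esub> b \<in> H1" if "a \<in> H1" "b \<in> H1" for a b
      proof -
        have "(a, \<one>\<^bsub>G2\<^esub>) \<otimes>\<^bsub>G1 \<times>\<times> G2\<^esub> (b, \<one>\<^bsub>G2\<^esub>) \<in> ?H"
          using subgroup.m_closed[OF sH] that unfolding H1_def by blast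
        then show ?thesis using that unfolding H1_def by simp
      qed
    qed
    have "subgroup H2 G2"
    proof (rule G2.subgroupI)
      show "H2 \<subseteq> carrier G2" unfolding H2_def by auto
      show "H2 \<noteq> {}" unfolding H2_def using subgroup.one_closed[OF sH] by auto
      show "inv\<^bsub>G2\<^esub> a \<in> H2" if "a \<in> H2" for a
      proof -
        have "inv\<^bsub>G1 \<times>\<times> G2\<^esub> (\<one>\<^bsub>G1\<^esub>, a) \<in> ?H"
          using subgroup.m_inv_closed[OF sH] that unfolding H2_def by blast
        moreover have "inv\<^bsub>G1 \<times>\<times> G2\<^esub> (\<one>\<^bsub>G1\<^esub>, a) = (\<one>\<^bsub>G1\<^esub>, inv\<^bsub>G2\<^esub> a)"
          using inv_DirProd[OF g1 g2, of "\<one>\<^bsub>G1\<^esub>" a] that G1.inv_one unfolding H2_def by simp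
        ultimately show ?thesis using that unfolding H2_def by simp
      qed
      show "a \<otimes>\<^bsub>G2\<^esub> b \<in> H2" if "a \<in> H2" "b \<in> H2" for a b
      proof -
        have "(\<one>\<^bsub>G1\<^esub>, a) \<otimes>\<^bsub>G1 \<times>\<times> G2\<^esub> (\<one>\<^bsub>G1\<^esub>, b) \<in> ?H"
          using subgroup.m_closed[OF sH] that unfolding H2_def by blast
        then show ?thesis using that unfolding H2_def by simp
      qed
    qed
    have "A1 \<union> B1 \<subseteq> H1"
    proof
      fix x assume x: "x \<in> A1 \<union> B1"
      then have "(x, \<one>\<^bsub>G2\<^esub>) \<in> ?S"
        using subgroup.one_closed[OF s(3)] subgroup.one_closed[OF s(4)] by auto
      then show "x \<in> H1" unfolding H1_def using SH x c1 by auto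
    qed
    then have i1: "generate G1 (A1 \<union> B1) \<subseteq> H1"
      using G1.generate_subgroup_incl \<open>subgroup H1 G1\<close> by blast
    have "A2 \<union> B2 \<subseteq> H2"
    proof
      fix x assume x: "x \<in> A2 \<union> B2"
      then have "(\<one>\<^bsub>G1\<^esub>, x) \<in> ?S"
        using subgroup.one_closed[OF s(1)] subgroup.one_closed[OF s(2)] by auto
      then show "x \<in> H2" unfolding H2_def using SH x c2 by auto
    qed
    then have i2: "generate G2 (A2 \<union> B2) \<subseteq> H2"
      using G2.generate_subgroup_incl \<open>subgroup H2 G2\<close> by blast
    show "generate G1 (A1 \<union> B1) \<times> generate G2 (A2 \<union> B2) \<subseteq> ?H"
    proof clarify
      fix x y assume "x \<in> generate G1 (A1 \<union> B1)" "y \<in> generate G2 (A2 \<union> B2)"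
      then have "x \<in> H1" "y \<in> H2" using i1 i2 by auto
      then have "(x, \<one>\<^bsub>G2\<^esub>) \<otimes>\<^bsub>G1 \<times>\<times> G2\<^esub> (\<one>\<^bsub>G1\<^esub>, y) \<in> ?H"
        using subgroup.m_closed[OF sH] unfolding H1_def H2_def by blast
      moreover have "x \<in> carrier G1" "y \<in> carrier G2" using \<open>x \<in> H1\<close> \<open>y \<in> H2\<close>
        unfolding H1_def H2_def by auto
      ultimately show "(x, y) \<in> ?H" by simp
    qed
  qed
qed

theorem mainTheorem12:
  fixes G1 :: "('a, 'c) monoid_scheme" and G2 :: "('b, 'd) monoid_scheme"
    and I :: "nat set" and K1 :: "nat \<Rightarrow> 'a set" and K2 :: "nat \<Rightarrow> 'b set"
  assumes "finite I"
    and "group G1" and "group G2"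
    and "\<And>i. i \<in> I \<Longrightarrow> subgroup (K1 i) G1"
    and "\<And>i. i \<in> I \<Longrightarrow> subgroup (K2 i) G2"
    and "subgroup_geometry_system G1 I K1"
    and "subgroup_geometry_system G2 I K2"
  shows "subgroup_geometry_system (G1 \<times>\<times> G2) I (\<lambda>i. K1 i \<times> K2 i)"
proof -
  note g1 = assms(2) and g2 = assms(3)
  have S1_1: "\<forall>\<tau> \<tau>'. \<tau> \<subseteq> I \<longrightarrow> \<tau>' \<subseteq> I \<longrightarrow> Kint G1 K1 (\<tau> \<inter> \<tau>') = generate G1 (Kint G1 K1 \<tau> \<union> Kint G1 K1 \<tau>')"
    using assms(6) unfolding subgroup_geometry_system_def by (elim conjE) assumption
  have S1_2: "\<forall>\<tau> i. \<tau> \<subset> I \<longrightarrow> i \<in> I - \<tau> \<longrightarrow> Kint G1 K1 \<tau> <#>\<^bsub>G1\<^esub> K1 i = Kint G1 (\<lambda>j. K1 j <#>\<^bsub>G1\<^esub> K1 i) \<tau>"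
    using assms(6) unfolding subgroup_geometry_system_def by (elim conjE) assumption
  have S1_3: "\<forall>i\<in>I. Kint G1 K1 I \<noteq> Kint G1 K1 (I - {i})"
    using assms(6) unfolding subgroup_geometry_system_def by (elim conjE) assumption
  note S1 = S1_1 S1_2 S1_3
  have S2_1: "\<forall>\<tau> \<tau>'. \<tau> \<subseteq> I \<longrightarrow> \<tau>' \<subseteq> I \<longrightarrow> Kint G2 K2 (\<tau> \<inter> \<tau>') = generate G2 (Kint G2 K2 \<tau> \<union> Kint G2 K2 \<tau>')"
    using assms(7) unfolding subgroup_geometry_system_def by (elim conjE) assumption
  have S2_2: "\<forall>\<tau> i. \<tau> \<subset> I \<longrightarrow> i \<in> I - \<tau> \<longrightarrow> Kint G2 K2 \<tau> <#>\<^bsub>G2\<^esub> K2 i = Kint G2 (\<lambda>j. K2 j <#>\<^bsub>G2\<^esub> K2 i) \<tau>"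
    using assms(7) unfolding subgroup_geometry_system_def by (elim conjE) assumption
  have S2_3: "\<forall>i\<in>I. Kint G2 K2 I \<noteq> Kint G2 K2 (I - {i})"
    using assms(7) unfolding subgroup_geometry_system_def by (elim conjE) assumption
  note S2 = S2_1 S2_2 S2_3
  have KS1: "\<And>\<tau>. \<tau> \<subseteq> I \<Longrightarrow> subgroup (Kint G1 K1 \<tau>) G1"
    by (rule Kint_subgroup[OF g1 assms(4)])
  have KS2: "\<And>\<tau>. \<tau> \<subseteq> I \<Longrightarrow> subgroup (Kint G2 K2 \<tau>) G2"
    by (rule Kint_subgroup[OF g2 assms(5)])
  have A1: "Kint (G1 \<times>\<times> G2) (\<lambda>i. K1 i \<times> K2 i) (\<tau> \<inter> \<tau>') =
      generate (G1 \<times>\<times> G2) (Kint (G1 \<times>\<times> G2) (\<lambda>i. K1 i \<times> K2 i) \<tau> \<union> Kint (G1 \<times>\<times> G2) (\<lambda>i. K1 i \<times> K2 i) \<tau>')"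
    if "\<tau> \<subseteq> I" "\<tau>' \<subseteq> I" for \<tau> \<tau>'
  proof -
    have e1: "Kint G1 K1 (\<tau> \<inter> \<tau>') = generate G1 (Kint G1 K1 \<tau> \<union> Kint G1 K1 \<tau>')"
      using S1_1 that by blast
    have e2: "Kint G2 K2 (\<tau> \<inter> \<tau>') = generate G2 (Kint G2 K2 \<tau> \<union> Kint G2 K2 \<tau>')"
      using S2_1 that by blast
    show ?thesis unfolding Kint_prod
      by (simp only: gen_prod[OF g1 g2 KS1[OF that(1)] KS1[OF that(2)] KS2[OF that(1)] KS2[OF that(2)]] e1 e2)
  qed
  have A2: "Kint (G1 \<times>\<times> G2) (\<lambda>i. K1 i \<times> K2 i) \<tau> <#>\<^bsub>G1 \<times>\<times> G2\<^esub> (K1 i \<times> K2 i) =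
      Kint (G1 \<times>\<times> G2) (\<lambda>j. (K1 j \<times> K2 j) <#>\<^bsub>G1 \<times>\<times> G2\<^esub> (K1 i \<times> K2 i)) \<tau>"
    if "\<tau> \<subset> I" "i \<in> I - \<tau>" for \<tau> i
  proof -
    have e1: "Kint G1 K1 \<tau> <#>\<^bsub>G1\<^esub> K1 i = Kint G1 (\<lambda>j. K1 j <#>\<^bsub>G1\<^esub> K1 i) \<tau>"
      using S1_2 that by blast
    have e2: "Kint G2 K2 \<tau> <#>\<^bsub>G2\<^esub> K2 i = Kint G2 (\<lambda>j. K2 j <#>\<^bsub>G2\<^esub> K2 i) \<tau>"
      using S2_2 that by blast
    show ?thesis unfolding Kint_prod setmult_prod by (simp only: e1 e2)
  qed
  have A3: "Kint (G1 \<times>\<times> G2) (\<lambda>i. K1 i \<times> K2 i) I \<noteq> Kint (G1 \<times>\<times> G2) (\<lambda>i. K1 i \<times> K2 i) (I - {i})"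
    if "i \<in> I" for i
  proof
    assume eq: "Kint (G1 \<times>\<times> G2) (\<lambda>i. K1 i \<times> K2 i) I = Kint (G1 \<times>\<times> G2) (\<lambda>i. K1 i \<times> K2 i) (I - {i})"
    have n1: "Kint G1 K1 I \<noteq> {}" "Kint G1 K1 (I - {i}) \<noteq> {}"
      using subgroup.one_closed[OF KS1[of I]] subgroup.one_closed[OF KS1[of "I - {i}"]] by auto
    have n2: "Kint G2 K2 I \<noteq> {}" "Kint G2 K2 (I - {i}) \<noteq> {}"
      using subgroup.one_closed[OF KS2[of I]] subgroup.one_closed[OF KS2[of "I - {i}"]] by auto
    have "Kint G1 K1 I \<times> Kint G2 K2 I = Kint G1 K1 (I - {i}) \<times> Kint G2 K2 (I - {i})"
      using eq unfolding Kint_prod .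
    then have "Kint G1 K1 I = Kint G1 K1 (I - {i})"
      using n1 n2 times_eq_iff by blast
    then show False using S1(3) that by blast
  qed
  show ?thesis
    unfolding subgroup_geometry_system_def
  proof (intro conjI allI impI ballI)
    show "group (G1 \<times>\<times> G2)" using DirProd_group[OF g1 g2] .
    show "subgroup (K1 i \<times> K2 i) (G1 \<times>\<times> G2)" if "i \<in> I" for i
      using DirProd_subgroups[OF g1 assms(4)[OF that] g2 assms(5)[OF that]] .
  qed (fact A1 A2 A3)+
qed

end
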